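(* MWL is subsumed by FO(ERDPQ): for every MWL formula there is an FO(ERDPQ) formula expressing the same query (position variables of sort $\pi$ being represented by path variables constrained to be prefixes of $\pi$). In particular WL is subsumed by FO(ERDPQ).
   Context: Data graphs. Fix a finite alphabet $\Sigma$ and infinite data domains $\mathcal D_{\mathrm{id}}$ and $\mathcal D_{\mathrm{prop}}$. A data graph is $G=(V,E,\mathrm{id},\mathrm{dataof})$ with $V$ a finite nonempty set of nodes, $E\subseteq V\times\Sigma\times V$, $\mathrm{id}:V\to\mathcal D_{\mathrm{id}}$ injective and $\mathrm{dataof}:V\to\mathcal D_{\mathrm{prop}}$. A path is a sequence $\rho=v_0a_1v_1\cdots a_nv_n$ ($n\ge 0$) with $(v_{i-1},a_i,v_i)\in E$ for all $i$; its length is $n$, its positions are $0,\dots,n$. Its data path is $d_0a_1d_1\cdots a_nd_n$ with $d_i=(\mathrm{id}(v_i),\mathrm{dataof}(v_i))$. RDPA. An $n$-ary register data path automaton (RDPA) has finitely many states partitioned into word states and data states, an initial data state, a set of final word states, and finitely many registers, each an id-register (values in $\mathcal D_{\mathrm{id}}\cup\{\sharp\}$) or a data-register (values in $\mathcal D_{\mathrm{prop}}\cup\{\sharp\}$), all initially $\sharp$. It reads words alternating between data letters and word letters, starting and ending with a data letter. From a word state it reads a letter of $(\Sigma\cup\{\sharp\})^n$ via a transition $p\xrightarrow{a}q$ to a data state, leaving registers unchanged. From a data state it reads a data letter (an $n$-tuple of ids and an $n$-tuple of property values, each possibly $\sharp$) via a transition whose guard is a conjunction of (well-typed) equalities/disequalities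 between registers, input components and constants, and whose update assigns to some registers an input component, a register value or a constant; it then moves to a word state. It accepts nondeterministically if some run ends in a final state. A tuple $(u_1,\dots,u_n)$ of data paths is accepted if their convolution (position-wise tuple, shorter ones padded with $\sharp$ to the length of the longest) is accepted. FO(ERDPQ). Formulas use node variables (ranging over $V$) and path variables (ranging over paths of $G$). Atoms: $\pi=\omega$; $x=y$; $(x,\pi,y)$ ("$\pi$ is a path from $x$ to $y$"); $(\pi_1,\dots,\pi_n)\in A$ for an $n$-ary RDPA $A$ ("the tuple of data paths of $\pi_1,\dots,\pi_n$ is accepted by $A$"). Formulas are closed under $\neg,\wedge,\exists x,\exists\pi$ with standard semantics. WL (walk logic). Path variables $\pi,\omega,\dots$ range over paths; each position variable $\ell^\pi$ has a sort $\pi$ and ranges over positions of the path assigned to $\pi$. Atoms: $E_a(\ell^\pi,m^\pi)$ ($m=\ell+1$ and the $m$-th label of the path is $a$); $\ell^\pi<m^\pi$ (same sort only); $\ell^\pi\equiv_{\mathrm{id}} n^\omega$ (the nodes at these positions are equal); $\ell^\pi\equiv_{\mathrm{data}} n^\omega$ (these nodes have equal $\mathrm{dataof}$). Closed under $\neg,\vee,\exists\ell^\pi,\exists\pi$. MWL (multi-path walk logic) is WL extended with atoms $\ell^\pi<n^\omega$ for arbitrary (possibly different) sorts $\pi,\omega$, true iff the position assigned to $\ell^\pi$ is smaller, as an integer, than the position assigned to $n^\omega$. *)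

theory Defs
  imports Main "HOL-Library.Nat_Bijection"
begin

record ('v, 'a, 'i, 'd) dgraph =
  V :: "'v set"
  E :: "('v \<times> 'a \<times> 'v) set"
  idf :: "'v \<Rightarrow> 'i"
  dataof :: "'v \<Rightarrow> 'd"

definition wf_dgraph :: "('v, 'a, 'i, 'd) dgraph \<Rightarrow> bool" where
  "wf_dgraph G \<longleftrightarrow> finite (V G) \<and> V G \<noteq> {} \<and> E G \<subseteq> V G \<times> UNIV \<times> V G
     \<and> inj_on (idf G) (V G)"

text \<open>A path v0 a1 v1 ... an vn is represented as (v0, [(a1,v1),...,(an,vn)]).\<close>
type_synonym ('v, 'a) path = "'v \<times> ('a \<times> 'v) list"

definition nodes :: "('v, 'a) path \<Rightarrow> 'v list" where
  "nodes p = fst p # map snd (snd p)"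

definition plen :: "('v, 'a) path \<Rightarrow> nat" where
  "plen p = length (snd p)"

definition is_path :: "('v, 'a, 'i, 'd) dgraph \<Rightarrow> ('v, 'a) path \<Rightarrow> bool" where
  "is_path G p \<longleftrightarrow> fst p \<in> V G \<and>
     (\<forall>i < plen p. (nodes p ! i, fst (snd p ! i), nodes p ! Suc i) \<in> E G)"

definition path_prefix :: "('v, 'a) path \<Rightarrow> nat \<Rightarrow> ('v, 'a) path" where
  "path_prefix p k = (fst p, take k (snd p))"

type_synonym ('a, 'i, 'd) dpath = "('i \<times> 'd) \<times> ('a \<times> ('i \<times> 'd)) list"

definition datapath :: "('v, 'a, 'i, 'd) dgraph \<Rightarrow> ('v, 'a) path \<Rightarrow> ('a, 'i, 'd) dpath" where
  "datapath G p = ((idf G (fst p), dataof G (fst p)),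
                   map (\<lambda>(a, v). (a, (idf G v, dataof G v))) (snd p))"

section \<open>Register data path automata\<close>

text \<open>Terms of a guard/update: a register, an input component, or a constant
  (None encodes the symbol sharp).\<close>
datatype 'x tm = Reg nat | Inp nat | Cst "'x option"

datatype ('i, 'd) gatom =
    IEq "'i tm" "'i tm" | INe "'i tm" "'i tm"
  | DEq "'d tm" "'d tm" | DNe "'d tm" "'d tm"

text \<open>A simultaneous update: for each id-register (resp. data-register) optionally a new term.\<close>
type_synonym ('i, 'd) upd = "(nat \<Rightarrow> 'i tm option) \<times> (nat \<Rightarrow> 'd tm option)"

type_synonym ('i, 'd) regval = "(nat \<Rightarrow> 'i option) \<times> (nat \<Rightarrow> 'd option)"
type_synonym ('i, 'd) dletter = "('i option \<times> 'd option) list"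
type_synonym 'a wletter = "'a option list"

text \<open>States are natural numbers; wstates are the word states, the remaining
  elements of states the data states.  Id-registers are 0..<nidr,
  data-registers are 0..<ndr.\<close>
record ('a, 'i, 'd) rdpa =
  arity :: nat
  states :: "nat set"
  wstates :: "nat set"
  init :: nat
  final :: "nat set"
  nidr :: nat
  ndr :: nat
  wtrans :: "(nat \<times> 'a wletter \<times> nat) set"
  dtrans :: "(nat \<times> ('i, 'd) gatom list \<times> ('i, 'd) upd \<times> nat) set"

fun tm_ok :: "nat \<Rightarrow> nat \<Rightarrow> 'x tm \<Rightarrow> bool" where
  "tm_ok nr n (Reg r) = (r < nr)"
| "tm_ok nr n (Inp j) = (j < n)"
| "tm_ok nr n (Cst c) = True"

fun gatom_ok :: "('a, 'i, 'd) rdpa \<Rightarrow> ('i, 'd) gatom \<Rightarrow> bool" where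
  "gatom_ok A (IEq s t) = (tm_ok (nidr A) (arity A) s \<and> tm_ok (nidr A) (arity A) t)"
| "gatom_ok A (INe s t) = (tm_ok (nidr A) (arity A) s \<and> tm_ok (nidr A) (arity A) t)"
| "gatom_ok A (DEq s t) = (tm_ok (ndr A) (arity A) s \<and> tm_ok (ndr A) (arity A) t)"
| "gatom_ok A (DNe s t) = (tm_ok (ndr A) (arity A) s \<and> tm_ok (ndr A) (arity A) t)"

definition upd_ok :: "('a, 'i, 'd) rdpa \<Rightarrow> ('i, 'd) upd \<Rightarrow> bool" where
  "upd_ok A u \<longleftrightarrow>
     (\<forall>r. (r \<ge> nidr A \<longrightarrow> fst u r = None) \<and>
          (\<forall>t. fst u r = Some t \<longrightarrow> tm_ok (nidr A) (arity A) t)) \<and>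
     (\<forall>r. (r \<ge> ndr A \<longrightarrow> snd u r = None) \<and>
          (\<forall>t. snd u r = Some t \<longrightarrow> tm_ok (ndr A) (arity A) t))"

definition wf_rdpa :: "('a, 'i, 'd) rdpa \<Rightarrow> bool" where
  "wf_rdpa A \<longleftrightarrow>
     finite (states A) \<and> wstates A \<subseteq> states A \<and>
     init A \<in> states A - wstates A \<and> final A \<subseteq> wstates A \<and>
     finite (wtrans A) \<and> finite (dtrans A) \<and>
     (\<forall>(p, w, q) \<in> wtrans A. p \<in> wstates A \<and> q \<in> states A - wstates A \<and> length w = arity A) \<and>
     (\<forall>(p, g, u, q) \<in> dtrans A. p \<in> states A - wstates A \<and> q \<in> wstates A \<and>
        (\<forall>at \<in> set g. gatom_ok A at) \<and> upd_ok A u)"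

fun tm_val :: "(nat \<Rightarrow> 'x option) \<Rightarrow> (nat \<Rightarrow> 'x option) \<Rightarrow> 'x tm \<Rightarrow> 'x option" where
  "tm_val R I (Reg r) = R r"
| "tm_val R I (Inp j) = I j"
| "tm_val R I (Cst c) = c"

definition inp_id :: "('i, 'd) dletter \<Rightarrow> nat \<Rightarrow> 'i option" where
  "inp_id d j = fst (d ! j)"

definition inp_data :: "('i, 'd) dletter \<Rightarrow> nat \<Rightarrow> 'd option" where
  "inp_data d j = snd (d ! j)"

fun gatom_sat :: "('i, 'd) regval \<Rightarrow> ('i, 'd) dletter \<Rightarrow> ('i, 'd) gatom \<Rightarrow> bool" where
  "gatom_sat R d (IEq s t) = (tm_val (fst R) (inp_id d) s = tm_val (fst R) (inp_id d) t)"
| "gatom_sat R d (INe s t) = (tm_val (fst R) (inp_id d) s \<noteq> tm_val (fst R) (inp_id d) t)"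
| "gatom_sat R d (DEq s t) = (tm_val (snd R) (inp_data d) s = tm_val (snd R) (inp_data d) t)"
| "gatom_sat R d (DNe s t) = (tm_val (snd R) (inp_data d) s \<noteq> tm_val (snd R) (inp_data d) t)"

definition guard_sat :: "('i, 'd) regval \<Rightarrow> ('i, 'd) dletter \<Rightarrow> ('i, 'd) gatom list \<Rightarrow> bool" where
  "guard_sat R d g \<longleftrightarrow> (\<forall>at \<in> set g. gatom_sat R d at)"

definition apply_upd :: "('i, 'd) upd \<Rightarrow> ('i, 'd) regval \<Rightarrow> ('i, 'd) dletter \<Rightarrow> ('i, 'd) regval" where
  "apply_upd u R d =
     ((\<lambda>r. case fst u r of None \<Rightarrow> fst R r | Some t \<Rightarrow> tm_val (fst R) (inp_id d) t),
      (\<lambda>r. case snd u r of None \<Rightarrow> snd R r | Some t \<Rightarrow> tm_val (snd R) (inp_data d) t))"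

text \<open>Acceptance from data state q with register valuation R of the remaining input
  d (w1 d1) ... (wk dk).\<close>
fun acc :: "('a, 'i, 'd) rdpa \<Rightarrow> nat \<Rightarrow> ('i, 'd) regval \<Rightarrow> ('i, 'd) dletter
            \<Rightarrow> ('a wletter \<times> ('i, 'd) dletter) list \<Rightarrow> bool" where
  "acc A q R d [] =
     (\<exists>g u p. (q, g, u, p) \<in> dtrans A \<and> guard_sat R d g \<and> p \<in> final A)"
| "acc A q R d ((w, d') # rest) =
     (\<exists>g u p. (q, g, u, p) \<in> dtrans A \<and> guard_sat R d g \<and>
        (\<exists>q'. (p, w, q') \<in> wtrans A \<and> acc A q' (apply_upd u R d) d' rest))"

definition dplen :: "('a, 'i, 'd) dpath \<Rightarrow> nat" where
  "dplen u = length (snd u)"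

definition dletter_at :: "('a, 'i, 'd) dpath list \<Rightarrow> nat \<Rightarrow> ('i, 'd) dletter" where
  "dletter_at us i = map (\<lambda>u.
      if i = 0 then (Some (fst (fst u)), Some (snd (fst u)))
      else if i \<le> dplen u then (Some (fst (snd (snd u ! (i - 1)))), Some (snd (snd (snd u ! (i - 1)))))
      else (None, None)) us"

definition wletter_at :: "('a, 'i, 'd) dpath list \<Rightarrow> nat \<Rightarrow> 'a wletter" where
  "wletter_at us i = map (\<lambda>u. if 1 \<le> i \<and> i \<le> dplen u then Some (fst (snd u ! (i - 1))) else None) us"

definition maxlen :: "('a, 'i, 'd) dpath list \<Rightarrow> nat" where
  "maxlen us = foldr max (map dplen us) 0"

definition accepts :: "('a, 'i, 'd) rdpa \<Rightarrow> ('a, 'i, 'd) dpath list \<Rightarrow> bool" where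
  "accepts A us \<longleftrightarrow>
     acc A (init A) (\<lambda>_. None, \<lambda>_. None) (dletter_at us 0)
       (map (\<lambda>i. (wletter_at us i, dletter_at us i)) [1..<Suc (maxlen us)])"

section \<open>FO(ERDPQ)\<close>

datatype ('a, 'i, 'd) fo =
    PEq nat nat
  | NEq nat nat
  | Reach nat nat nat
  | InA "nat list" "('a, 'i, 'd) rdpa"
  | FNot "('a, 'i, 'd) fo"
  | FAnd "('a, 'i, 'd) fo" "('a, 'i, 'd) fo"
  | ExN nat "('a, 'i, 'd) fo"
  | ExP nat "('a, 'i, 'd) fo"

fun wf_fo :: "('a, 'i, 'd) fo \<Rightarrow> bool" where
  "wf_fo (InA ps A) = (wf_rdpa A \<and> length ps = arity A)"
| "wf_fo (FNot f) = wf_fo f"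
| "wf_fo (FAnd f g) = (wf_fo f \<and> wf_fo g)"
| "wf_fo (ExN x f) = wf_fo f"
| "wf_fo (ExP x f) = wf_fo f"
| "wf_fo _ = True"

fun fo_sat :: "('v, 'a, 'i, 'd) dgraph \<Rightarrow> (nat \<Rightarrow> 'v) \<Rightarrow> (nat \<Rightarrow> ('v, 'a) path)
               \<Rightarrow> ('a, 'i, 'd) fo \<Rightarrow> bool" where
  "fo_sat G \<nu> \<mu> (PEq p q) = (\<mu> p = \<mu> q)"
| "fo_sat G \<nu> \<mu> (NEq x y) = (\<nu> x = \<nu> y)"
| "fo_sat G \<nu> \<mu> (Reach x p y) = (fst (\<mu> p) = \<nu> x \<and> last (nodes (\<mu> p)) = \<nu> y)"
| "fo_sat G \<nu> \<mu> (InA ps A) = accepts A (map (\<lambda>p. datapath G (\<mu> p)) ps)"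
| "fo_sat G \<nu> \<mu> (FNot f) = (\<not> fo_sat G \<nu> \<mu> f)"
| "fo_sat G \<nu> \<mu> (FAnd f g) = (fo_sat G \<nu> \<mu> f \<and> fo_sat G \<nu> \<mu> g)"
| "fo_sat G \<nu> \<mu> (ExN x f) = (\<exists>v \<in> V G. fo_sat G (\<nu>(x := v)) \<mu> f)"
| "fo_sat G \<nu> \<mu> (ExP p f) = (\<exists>r. is_path G r \<and> fo_sat G \<nu> (\<mu>(p := r)) f)"

section \<open>(Multi-path) walk logic\<close>

text \<open>A position variable l of sort pi is the pair (l, pi).\<close>
type_synonym posvar = "nat \<times> nat"

datatype 'a mwl =
    Edge 'a nat nat nat
  | Lt posvar posvar
  | EqId posvar posvar
  | EqData posvar posvar
  | MNot "'a mwl"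
  | MOr "'a mwl" "'a mwl"
  | ExPos posvar "'a mwl"
  | ExPath nat "'a mwl"

fun fpv :: "'a mwl \<Rightarrow> posvar set" where
  "fpv (Edge a l m p) = {(l, p), (m, p)}"
| "fpv (Lt x y) = {x, y}"
| "fpv (EqId x y) = {x, y}"
| "fpv (EqData x y) = {x, y}"
| "fpv (MNot f) = fpv f"
| "fpv (MOr f g) = fpv f \<union> fpv g"
| "fpv (ExPos x f) = fpv f - {x}"
| "fpv (ExPath p f) = fpv f"

fun wf_mwl :: "'a mwl \<Rightarrow> bool" where
  "wf_mwl (MNot f) = wf_mwl f"
| "wf_mwl (MOr f g) = (wf_mwl f \<and> wf_mwl g)"
| "wf_mwl (ExPos x f) = wf_mwl f"
| "wf_mwl (ExPath p f) = (wf_mwl f \<and> (\<forall>x \<in> fpv f. snd x \<noteq> p))"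
| "wf_mwl _ = True"

fun is_wl :: "'a mwl \<Rightarrow> bool" where
  "is_wl (Lt x y) = (snd x = snd y)"
| "is_wl (MNot f) = is_wl f"
| "is_wl (MOr f g) = (is_wl f \<and> is_wl g)"
| "is_wl (ExPos x f) = is_wl f"
| "is_wl (ExPath p f) = is_wl f"
| "is_wl _ = True"

definition node_at :: "(nat \<Rightarrow> ('v, 'a) path) \<Rightarrow> (posvar \<Rightarrow> nat) \<Rightarrow> posvar \<Rightarrow> 'v" where
  "node_at \<mu> \<kappa> x = nodes (\<mu> (snd x)) ! \<kappa> x"

fun mwl_sat :: "('v, 'a, 'i, 'd) dgraph \<Rightarrow> (nat \<Rightarrow> ('v, 'a) path) \<Rightarrow> (posvar \<Rightarrow> nat)
                \<Rightarrow> 'a mwl \<Rightarrow> bool" where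
  "mwl_sat G \<mu> \<kappa> (Edge a l m p) =
     (\<kappa> (m, p) = Suc (\<kappa> (l, p)) \<and> \<kappa> (m, p) \<le> plen (\<mu> p) \<and>
      fst (snd (\<mu> p) ! \<kappa> (l, p)) = a)"
| "mwl_sat G \<mu> \<kappa> (Lt x y) = (\<kappa> x < \<kappa> y)"
| "mwl_sat G \<mu> \<kappa> (EqId x y) = (node_at \<mu> \<kappa> x = node_at \<mu> \<kappa> y)"
| "mwl_sat G \<mu> \<kappa> (EqData x y) = (dataof G (node_at \<mu> \<kappa> x) = dataof G (node_at \<mu> \<kappa> y))"
| "mwl_sat G \<mu> \<kappa> (MNot f) = (\<not> mwl_sat G \<mu> \<kappa> f)"
| "mwl_sat G \<mu> \<kappa> (MOr f g) = (mwl_sat G \<mu> \<kappa> f \<or> mwl_sat G \<mu> \<kappa> g)"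
| "mwl_sat G \<mu> \<kappa> (ExPos x f) = (\<exists>k \<le> plen (\<mu> (snd x)). mwl_sat G \<mu> (\<kappa>(x := k)) f)"
| "mwl_sat G \<mu> \<kappa> (ExPath p f) = (\<exists>r. is_path G r \<and> mwl_sat G (\<mu>(p := r)) \<kappa> f)"

text \<open>Path variable pi of the MWL formula is FO path variable 2*pi; position variable
  (l, pi) is FO path variable 2*prod_encode(l,pi)+1, interpreted as the prefix of pi
  of length equal to the position.\<close>
definition repr_val :: "(nat \<Rightarrow> ('v, 'a) path) \<Rightarrow> (posvar \<Rightarrow> nat) \<Rightarrow> nat \<Rightarrow> ('v, 'a) path" where
  "repr_val \<mu> \<kappa> n =
     (if even n then \<mu> (n div 2)
      else (let x = prod_decode (n div 2) in path_prefix (\<mu> (snd x)) (\<kappa> x)))"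

end

theory Submission
  imports Defs
begin


definition noupd :: "('i,'d) upd" where "noupd = (\<lambda>_. None, \<lambda>_. None)"

definition rs :: "('a,'i,'d) dpath list \<Rightarrow> nat \<Rightarrow> nat \<Rightarrow> ('a wletter \<times> ('i,'d) dletter) list" where
  "rs us j m = map (\<lambda>i. (wletter_at us i, dletter_at us i)) [Suc j..<Suc m]"

lemma rs_last[simp]: "rs us m m = []" by (simp add: rs_def)
lemma rs_Cons: "j < m \<Longrightarrow> rs us j m = (wletter_at us (Suc j), dletter_at us (Suc j)) # rs us (Suc j) m"
  by (simp add: rs_def upt_conv_Cons del: upt_Suc)

lemma accepts_rs: "accepts A us = acc A (init A) (\<lambda>_. None, \<lambda>_. None) (dletter_at us 0) (rs us 0 (maxlen us))"
  by (simp add: accepts_def rs_def)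

lemma len_wl[simp]: "length (wletter_at us i) = length us" by (simp add: wletter_at_def)

definition ltA :: "('a,'i,'d) rdpa" where
"ltA = \<lparr>arity = 2, states = {0,1,2}, wstates = {1,2}, init = 0, final = {2}, nidr = 0, ndr = 0,
  wtrans = (\<lambda>w. (1,w,0)) ` {w. length w = 2},
  dtrans = {(0, [], noupd, 1), (0, [IEq (Inp 0) (Cst None)], noupd, 2)}\<rparr>"

lemma ltA_simps[simp]: "dtrans ltA = {(0, [], noupd, 1), (0, [IEq (Inp 0) (Cst None)], noupd, 2)}"
  "final ltA = {2}" "init ltA = 0" "(p, w, q) \<in> wtrans ltA \<longleftrightarrow> p = 1 \<and> q = 0 \<and> length w = 2"
  by (auto simp: ltA_def)

lemma lt_acc: assumes "length us = 2" shows "j \<le> m \<Longrightarrow>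
  acc ltA 0 R (dletter_at us j) (rs us j m) \<longleftrightarrow> fst (dletter_at us m ! 0) = None"
proof (induction "m - j" arbitrary: j R)
  case 0 then show ?case by (simp add: guard_sat_def inp_id_def)
next
  case (Suc x)
  then have "j < m" by simp
  then show ?case using Suc(1)[of "Suc j"] Suc(2) assms
    by (simp add: rs_Cons guard_sat_def inp_id_def)
qed

lemma maxlen2[simp]: "maxlen [a,b] = max (dplen a) (dplen b)" by (simp add: maxlen_def)

lemma accepts_lt: "accepts ltA [du,dw] \<longleftrightarrow> dplen du < dplen dw"
proof -
  have "accepts ltA [du,dw] \<longleftrightarrow> fst (dletter_at [du,dw] (max (dplen du) (dplen dw)) ! 0) = None"
    unfolding accepts_rs by (simp add: lt_acc del: maxlen2) (simp)
  then show ?thesis by (auto simp: dletter_at_def)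
qed

lemma dl2: "dletter_at [du,dw] i = [(if i = 0 then (Some (fst (fst du)), Some (snd (fst du)))
      else if i \<le> dplen du then (Some (fst (snd (snd du ! (i - 1)))), Some (snd (snd (snd du ! (i - 1))))) else (None, None)),
     (if i = 0 then (Some (fst (fst dw)), Some (snd (fst dw)))
      else if i \<le> dplen dw then (Some (fst (snd (snd dw ! (i - 1)))), Some (snd (snd (snd dw ! (i - 1))))) else (None, None))]"
  by (simp add: dletter_at_def)

lemma wl2: "wletter_at [du,dw] i = [(if 1 \<le> i \<and> i \<le> dplen du then Some (fst (snd du ! (i - 1))) else None),
   (if 1 \<le> i \<and> i \<le> dplen dw then Some (fst (snd dw ! (i - 1))) else None)]"
  by (simp add: wletter_at_def)

definition edgeA :: "'a \<Rightarrow> ('a,'i,'d) rdpa" where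
"edgeA a = \<lparr>arity = 2, states = {0,1,2,3,4}, wstates = {1,3,4}, init = 0, final = {4}, nidr = 0, ndr = 0,
  wtrans = (\<lambda>w. (1,w,0)) ` {w. length w = 2} \<union> {(3,[None,Some a],2)},
  dtrans = {(0, [], noupd, 1), (0, [INe (Inp 0) (Cst None)], noupd, 3), (2, [IEq (Inp 0) (Cst None)], noupd, 4)}\<rparr>"

lemma edgeA_simps[simp]: "dtrans (edgeA a) = {(0, [], noupd, 1), (0, [INe (Inp 0) (Cst None)], noupd, 3), (2, [IEq (Inp 0) (Cst None)], noupd, 4)}"
  "final (edgeA a) = {4}" "init (edgeA a) = 0"
  "(p, w, q) \<in> wtrans (edgeA a) \<longleftrightarrow> (p = 1 \<and> q = 0 \<and> length w = 2) \<or> (p = 3 \<and> q = 2 \<and> w = [None, Some a])"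
  by (auto simp: edgeA_def)

lemma edge_acc2: "j \<le> m \<Longrightarrow> acc (edgeA a) 2 R (dletter_at us j) (rs us j m) \<longleftrightarrow> j = m \<and> fst (dletter_at us j ! 0) = None"
  by (cases "j = m") (auto simp: rs_Cons guard_sat_def inp_id_def)

lemma edge_step: "j < m \<Longrightarrow> acc (edgeA a) 0 R (dletter_at us j) (rs us j m) \<longleftrightarrow>
   (length us = 2 \<and> acc (edgeA a) 0 (apply_upd noupd R (dletter_at us j)) (dletter_at us (Suc j)) (rs us (Suc j) m)) \<or>
   (fst (dletter_at us j ! 0) \<noteq> None \<and> wletter_at us (Suc j) = [None, Some a] \<and> Suc j = m \<and> fst (dletter_at us (Suc j) ! 0) = None)"
  apply (simp only: rs_Cons acc.simps edgeA_simps)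
  apply (simp add: guard_sat_def inp_id_def noupd_def conj_disj_distribR ex_disj_distrib edge_acc2 del: upt_Suc)
  done

lemma edge_acc0: "j \<le> max (dplen du) (dplen dw) \<Longrightarrow>
  acc (edgeA a) 0 R (dletter_at [du,dw] j) (rs [du,dw] j (max (dplen du) (dplen dw))) \<longleftrightarrow>
   j \<le> dplen du \<and> dplen dw = Suc (dplen du) \<and> fst (snd dw ! dplen du) = a"
proof (induction "max (dplen du) (dplen dw) - j" arbitrary: j R)
  case 0
  then have "j = max (dplen du) (dplen dw)" by (simp add: max_def)
  then have "rs [du,dw] j (max (dplen du) (dplen dw)) = []" by simp
  then show ?case using 0 by (auto simp: guard_sat_def inp_id_def)
next
  case (Suc x)
  let ?m = "max (dplen du) (dplen dw)"
  from Suc have jm: "j < ?m" by simp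
  have IH: "\<And>R. acc (edgeA a) 0 R (dletter_at [du,dw] (Suc j)) (rs [du,dw] (Suc j) ?m) \<longleftrightarrow>
   Suc j \<le> dplen du \<and> dplen dw = Suc (dplen du) \<and> fst (snd dw ! dplen du) = a"
    using Suc(1)[of "Suc j"] Suc(2) jm by simp
  have F1: "fst (dletter_at [du,dw] j ! 0) \<noteq> None \<longleftrightarrow> j \<le> dplen du" by (simp add: dl2)
  have F2: "wletter_at [du,dw] (Suc j) = [None, Some a] \<longleftrightarrow> \<not> Suc j \<le> dplen du \<and> Suc j \<le> dplen dw \<and> fst (snd dw ! j) = a"
    by (simp add: wl2)
  have F3: "fst (dletter_at [du,dw] (Suc j) ! 0) = None \<longleftrightarrow> dplen du < Suc j" by (auto simp: dl2)
  show ?case unfolding edge_step[OF jm] IH F1 F2 F3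
    by (cases "dplen du = j") auto
qed

lemma accepts_edge: "accepts (edgeA a) [du,dw] \<longleftrightarrow> dplen dw = Suc (dplen du) \<and> fst (snd dw ! dplen du) = a"
  unfolding accepts_rs by (simp add: edge_acc0 del: maxlen2) (simp add: edge_acc0)

definition fdA :: "('a,'i,'d) rdpa" where
"fdA = \<lparr>arity = 2, states = {0,1,2}, wstates = {1}, init = 0, final = {1}, nidr = 0, ndr = 0,
  wtrans = (\<lambda>w. (1,w,2)) ` {w. length w = 2},
  dtrans = {(0, [DEq (Inp 0) (Inp 1)], noupd, 1), (2, [], noupd, 1)}\<rparr>"

lemma fdA_simps[simp]: "dtrans fdA = {(0, [DEq (Inp 0) (Inp 1)], noupd, 1), (2, [], noupd, 1)}"
  "final fdA = {1}" "init fdA = 0" "(p, w, q) \<in> wtrans fdA \<longleftrightarrow> p = 1 \<and> q = 2 \<and> length w = 2"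
  by (auto simp: fdA_def)

lemma fd_acc2: assumes "length us = 2" shows "j \<le> m \<Longrightarrow> acc fdA 2 R (dletter_at us j) (rs us j m)"
proof (induction "m - j" arbitrary: j R)
  case 0 then show ?case by (simp add: guard_sat_def)
next
  case (Suc x)
  then have "j < m" by simp
  then show ?case using Suc(1)[of "Suc j"] Suc(2) assms
    by (simp add: rs_Cons guard_sat_def)
qed

lemma fd_acc0: assumes "length us = 2" shows "acc fdA 0 R (dletter_at us 0) (rs us 0 m) \<longleftrightarrow>
   snd (dletter_at us 0 ! 0) = snd (dletter_at us 0 ! 1)"
  using assms by (cases "m = 0") (auto simp: rs_Cons fd_acc2 guard_sat_def inp_data_def)

lemma accepts_fd: "accepts fdA [du,dw] \<longleftrightarrow> snd (fst du) = snd (fst dw)"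
  unfolding accepts_rs fdA_simps(3) by (subst fd_acc0) (simp_all add: dl2)

definition prefA :: "('a,'i,'d) rdpa" where
"prefA = \<lparr>arity = 2, states = {0,1,2,3}, wstates = {1,3}, init = 0, final = {1,3}, nidr = 0, ndr = 0,
  wtrans = (\<lambda>b. (1,[Some b, Some b],0)) ` UNIV \<union> (\<lambda>x. (1,[None,x],2)) ` UNIV \<union> (\<lambda>x. (3,[None,x],2)) ` UNIV,
  dtrans = {(0, [IEq (Inp 0) (Inp 1), DEq (Inp 0) (Inp 1)], noupd, 1), (2, [IEq (Inp 0) (Cst None)], noupd, 3)}\<rparr>"

lemma prefA_simps[simp]: "dtrans prefA = {(0, [IEq (Inp 0) (Inp 1), DEq (Inp 0) (Inp 1)], noupd, 1), (2, [IEq (Inp 0) (Cst None)], noupd, 3)}"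
  "final prefA = {1,3}" "init prefA = 0"
  "(p, w, q) \<in> wtrans prefA \<longleftrightarrow> (p = 1 \<and> q = 0 \<and> (\<exists>b. w = [Some b, Some b])) \<or> ((p = 1 \<or> p = 3) \<and> q = 2 \<and> (\<exists>x. w = [None, x]))"
  by (auto simp: prefA_def)

lemma pref2_step: "j < m \<Longrightarrow> acc prefA 2 R (dletter_at us j) (rs us j m) \<longleftrightarrow>
   fst (dletter_at us j ! 0) = None \<and> (\<exists>x. wletter_at us (Suc j) = [None, x]) \<and>
   acc prefA 2 (apply_upd noupd R (dletter_at us j)) (dletter_at us (Suc j)) (rs us (Suc j) m)"
  apply (simp only: rs_Cons acc.simps prefA_simps)
  apply (simp add: guard_sat_def inp_id_def noupd_def conj_disj_distribR ex_disj_distrib del: upt_Suc)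
  done

lemma pref2_base: "acc prefA 2 R (dletter_at us m) (rs us m m) \<longleftrightarrow> fst (dletter_at us m ! 0) = None"
  by (simp add: guard_sat_def inp_id_def)

lemma pref2: "j \<le> max (dplen du) (dplen dw) \<Longrightarrow>
  acc prefA 2 R (dletter_at [du,dw] j) (rs [du,dw] j (max (dplen du) (dplen dw))) \<longleftrightarrow> dplen du < j"
proof (induction "max (dplen du) (dplen dw) - j" arbitrary: j R)
  case 0
  then have "j = max (dplen du) (dplen dw)" by (simp add: max_def)
  then have "acc prefA 2 R (dletter_at [du,dw] j) (rs [du,dw] j (max (dplen du) (dplen dw))) \<longleftrightarrow> fst (dletter_at [du,dw] j ! 0) = None"
    using pref2_base[of R "[du,dw]" j] by simp
  then show ?case by (auto simp: dl2)
next
  case (Suc x)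
  let ?m = "max (dplen du) (dplen dw)"
  from Suc have jm: "j < ?m" by simp
  have IH: "\<And>R. acc prefA 2 R (dletter_at [du,dw] (Suc j)) (rs [du,dw] (Suc j) ?m) \<longleftrightarrow> dplen du < Suc j"
    using Suc(1)[of "Suc j"] Suc(2) jm by simp
  show ?case unfolding pref2_step[OF jm] IH by (auto simp: dl2 wl2)
qed

lemma pref0_step: "j < m \<Longrightarrow> acc prefA 0 R (dletter_at us j) (rs us j m) \<longleftrightarrow>
   dletter_at us j ! 0 = dletter_at us j ! 1 \<and>
   ((\<exists>b. wletter_at us (Suc j) = [Some b, Some b]) \<and>
      acc prefA 0 (apply_upd noupd R (dletter_at us j)) (dletter_at us (Suc j)) (rs us (Suc j) m)
   \<or> (\<exists>x. wletter_at us (Suc j) = [None, x]) \<and>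
      acc prefA 2 (apply_upd noupd R (dletter_at us j)) (dletter_at us (Suc j)) (rs us (Suc j) m))"
  apply (simp only: rs_Cons acc.simps prefA_simps)
  apply (simp add: guard_sat_def inp_id_def inp_data_def noupd_def conj_disj_distribR ex_disj_distrib prod_eq_iff del: upt_Suc)
  done

lemma pref0_base: "acc prefA 0 R (dletter_at us m) (rs us m m) \<longleftrightarrow> dletter_at us m ! 0 = dletter_at us m ! 1"
  by (simp add: guard_sat_def inp_id_def inp_data_def prod_eq_iff)

lemma E_iff: "j \<le> max (dplen du) (dplen dw) \<Longrightarrow>
  dletter_at [du,dw] j ! 0 = dletter_at [du,dw] j ! 1 \<longleftrightarrow>
  j \<le> dplen du \<and> j \<le> dplen dw \<and> (j = 0 \<longrightarrow> fst du = fst dw) \<and>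
  (0 < j \<longrightarrow> snd (snd du ! (j - 1)) = snd (snd dw ! (j - 1)))"
  by (auto simp: dl2 prod_eq_iff)

lemma pref0: "j \<le> max (dplen du) (dplen dw) \<Longrightarrow>
  acc prefA 0 R (dletter_at [du,dw] j) (rs [du,dw] j (max (dplen du) (dplen dw))) \<longleftrightarrow>
  j \<le> dplen du \<and> dplen du \<le> dplen dw \<and> dletter_at [du,dw] j ! 0 = dletter_at [du,dw] j ! 1 \<and>
  (\<forall>i. j \<le> i \<and> i < dplen du \<longrightarrow> snd du ! i = snd dw ! i)"
proof (induction "max (dplen du) (dplen dw) - j" arbitrary: j R)
  case 0
  then have "j = max (dplen du) (dplen dw)" by (simp add: max_def)
  then have "acc prefA 0 R (dletter_at [du,dw] j) (rs [du,dw] j (max (dplen du) (dplen dw))) \<longleftrightarrow> dletter_at [du,dw] j ! 0 = dletter_at [du,dw] j ! 1"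
    using pref0_base[of R "[du,dw]" j] by simp
  then show ?case using E_iff[of j du dw] \<open>j = _\<close> by (auto simp: max_def split: if_splits)
next
  case (Suc x)
  let ?m = "max (dplen du) (dplen dw)"
  from Suc have jm: "j < ?m" by simp
  have IH: "\<And>R. acc prefA 0 R (dletter_at [du,dw] (Suc j)) (rs [du,dw] (Suc j) ?m) \<longleftrightarrow>
     Suc j \<le> dplen du \<and> dplen du \<le> dplen dw \<and> dletter_at [du,dw] (Suc j) ! 0 = dletter_at [du,dw] (Suc j) ! 1 \<and>
  (\<forall>i. Suc j \<le> i \<and> i < dplen du \<longrightarrow> snd du ! i = snd dw ! i)"
    using Suc(1)[of "Suc j"] Suc(2) jm by simp
  have P2: "\<And>R. acc prefA 2 R (dletter_at [du,dw] (Suc j)) (rs [du,dw] (Suc j) ?m) \<longleftrightarrow> dplen du < Suc j"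
    using pref2[of "Suc j" du dw] jm by simp
  have W1: "(\<exists>b. wletter_at [du,dw] (Suc j) = [Some b, Some b]) \<longleftrightarrow>
     Suc j \<le> dplen du \<and> Suc j \<le> dplen dw \<and> fst (snd du ! j) = fst (snd dw ! j)"
    by (auto simp: wl2)
  have W2: "(\<exists>x. wletter_at [du,dw] (Suc j) = [None, x]) \<longleftrightarrow> dplen du < Suc j"
    by (auto simp: wl2)
  have Ej: "dletter_at [du,dw] j ! 0 = dletter_at [du,dw] j ! 1 \<longleftrightarrow>
  j \<le> dplen du \<and> j \<le> dplen dw \<and> (j = 0 \<longrightarrow> fst du = fst dw) \<and>
  (0 < j \<longrightarrow> snd (snd du ! (j - 1)) = snd (snd dw ! (j - 1)))" using E_iff[of j du dw] jm by simp
  have ESj: "dletter_at [du,dw] (Suc j) ! 0 = dletter_at [du,dw] (Suc j) ! 1 \<longleftrightarrow>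
  Suc j \<le> dplen du \<and> Suc j \<le> dplen dw \<and> snd (snd du ! j) = snd (snd dw ! j)"
    using E_iff[of "Suc j" du dw] jm by simp
  show ?case
  proof (cases "j < dplen du")
    case True
    have split: "(\<forall>i. j \<le> i \<and> i < dplen du \<longrightarrow> snd du ! i = snd dw ! i) \<longleftrightarrow>
       snd du ! j = snd dw ! j \<and> (\<forall>i. Suc j \<le> i \<and> i < dplen du \<longrightarrow> snd du ! i = snd dw ! i)"
    proof
      assume A: "\<forall>i. j \<le> i \<and> i < dplen du \<longrightarrow> snd du ! i = snd dw ! i"
      show "snd du ! j = snd dw ! j \<and> (\<forall>i. Suc j \<le> i \<and> i < dplen du \<longrightarrow> snd du ! i = snd dw ! i)"
        using A[rule_format, of j] A True by auto
    next
      assume B: "snd du ! j = snd dw ! j \<and> (\<forall>i. Suc j \<le> i \<and> i < dplen du \<longrightarrow> snd du ! i = snd dw ! i)"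
      show "\<forall>i. j \<le> i \<and> i < dplen du \<longrightarrow> snd du ! i = snd dw ! i"
      proof (intro allI impI)
        fix i assume "j \<le> i \<and> i < dplen du"
        then show "snd du ! i = snd dw ! i" using B by (cases "i = j") auto
      qed
    qed
    show ?thesis unfolding pref0_step[OF jm] IH P2 W1 W2 ESj split
      using True by (auto simp: prod_eq_iff)
  next
    case False
    then show ?thesis unfolding pref0_step[OF jm] IH P2 W1 W2 ESj
      using Ej by auto
  qed
qed

lemma accepts_pref: "accepts prefA [du,dw] \<longleftrightarrow>
  dplen du \<le> dplen dw \<and> fst du = fst dw \<and> (\<forall>i < dplen du. snd du ! i = snd dw ! i)"
proof -
  have "accepts prefA [du,dw] \<longleftrightarrow> acc prefA 0 (\<lambda>_. None, \<lambda>_. None) (dletter_at [du,dw] 0) (rs [du,dw] 0 (max (dplen du) (dplen dw)))"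
    unfolding accepts_rs by simp
  also have "\<dots> \<longleftrightarrow> dplen du \<le> dplen dw \<and> fst du = fst dw \<and> (\<forall>i < dplen du. snd du ! i = snd dw ! i)"
    using pref0[of 0 du dw "(\<lambda>_. None, \<lambda>_. None)"] E_iff[of 0 du dw] by simp
  finally show ?thesis .
qed



lemma finite_len2: "finite {w :: ('a::finite) option list. length w = 2}"
proof -
  have "{w :: 'a option list. length w = 2} = {w. set w \<subseteq> UNIV \<and> length w = 2}" by simp
  then show ?thesis using finite_lists_length_eq[of "UNIV :: 'a option set" 2] by simp
qed

lemma noupd_ok: "upd_ok A noupd" by (simp add: upd_ok_def noupd_def)

lemma wf_ltA: "wf_rdpa (ltA :: ('a::finite,'i,'d) rdpa)"
  by (auto simp: wf_rdpa_def ltA_def finite_len2 noupd_ok)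
lemma wf_edgeA: "wf_rdpa (edgeA a :: ('a::finite,'i,'d) rdpa)"
  by (auto simp: wf_rdpa_def edgeA_def finite_len2 noupd_ok)
lemma wf_fdA: "wf_rdpa (fdA :: ('a::finite,'i,'d) rdpa)"
  by (auto simp: wf_rdpa_def fdA_def finite_len2 noupd_ok)
lemma wf_prefA: "wf_rdpa (prefA :: ('a::finite,'i,'d) rdpa)"
  by (auto simp: wf_rdpa_def prefA_def noupd_ok)

lemma ar[simp]: "arity ltA = 2" "arity (edgeA a) = 2" "arity fdA = 2" "arity prefA = 2"
  by (auto simp: ltA_def edgeA_def fdA_def prefA_def)


lemma length_nodes[simp]: "length (nodes p) = Suc (plen p)" by (simp add: nodes_def plen_def)
lemma plen_prefix[simp]: "k \<le> plen p \<Longrightarrow> plen (path_prefix p k) = k"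
  by (simp add: path_prefix_def plen_def)
lemma nodes_prefix: "nodes (path_prefix p k) = take (Suc k) (nodes p)"
  by (simp add: path_prefix_def nodes_def take_map)
lemma fst_prefix[simp]: "fst (path_prefix p k) = fst p" by (simp add: path_prefix_def)

lemma is_path_prefix: "is_path G p \<Longrightarrow> is_path G (path_prefix p k)"
  unfolding is_path_def
proof (intro conjI allI impI)
  assume H: "fst p \<in> V G \<and> (\<forall>i<plen p. (nodes p ! i, fst (snd p ! i), nodes p ! Suc i) \<in> E G)"
  then show "fst (path_prefix p k) \<in> V G" by simp
  fix i assume i: "i < plen (path_prefix p k)"
  then have "i < plen p" "i < k" by (auto simp: path_prefix_def plen_def)
  moreover have "nodes (path_prefix p k) ! i = nodes p ! i" "nodes (path_prefix p k) ! Suc i = nodes p ! Suc i"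
    using \<open>i < k\<close> by (simp_all add: nodes_prefix)
  moreover have "snd (path_prefix p k) ! i = snd p ! i" using \<open>i < k\<close> by (simp add: path_prefix_def)
  ultimately show "(nodes (path_prefix p k) ! i, fst (snd (path_prefix p k) ! i), nodes (path_prefix p k) ! Suc i) \<in> E G"
    using H by simp
qed

lemma nodes_Suc: "i < plen p \<Longrightarrow> nodes p ! Suc i = snd (snd p ! i)"
  by (simp add: nodes_def plen_def)
lemma nodes_0[simp]: "nodes p ! 0 = fst p" by (simp add: nodes_def)

lemma node_in_V: assumes "wf_dgraph G" "is_path G p" "i \<le> plen p" shows "nodes p ! i \<in> V G"
proof (cases i)
  case 0 then show ?thesis using assms by (simp add: is_path_def)
next
  case (Suc j)
  then have "j < plen p" using assms by simp
  then have "(nodes p ! j, fst (snd p ! j), nodes p ! Suc j) \<in> E G" using assms(2) by (simp add: is_path_def)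
  then show ?thesis using assms(1) Suc by (auto simp: wf_dgraph_def)
qed

lemma last_nodes: "last (nodes p) = nodes p ! plen p"
proof -
  have "nodes p \<noteq> []" by (simp add: nodes_def)
  then show ?thesis by (simp add: last_conv_nth)
qed

lemma last_prefix: "k \<le> plen p \<Longrightarrow> last (nodes (path_prefix p k)) = nodes p ! k"
  by (simp add: nodes_prefix take_Suc_conv_app_nth)

lemma dplen_datapath[simp]: "dplen (datapath G p) = plen p"
  by (simp add: datapath_def dplen_def plen_def)

lemma prefix_char: assumes G: "wf_dgraph G" and r: "is_path G r" and p: "is_path G p"
  shows "accepts prefA [datapath G r, datapath G p] \<longleftrightarrow> plen r \<le> plen p \<and> r = path_prefix p (plen r)"
proof
  assume A: "accepts prefA [datapath G r, datapath G p]"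
  then have le: "plen r \<le> plen p" and f: "fst (datapath G r) = fst (datapath G p)"
    and s: "\<forall>i < plen r. snd (datapath G r) ! i = snd (datapath G p) ! i"
    by (auto simp: accepts_pref)
  have inj: "inj_on (idf G) (V G)" using G by (simp add: wf_dgraph_def)
  have "fst r \<in> V G" "fst p \<in> V G" using r p by (auto simp: is_path_def)
  with f inj have f': "fst r = fst p" by (auto simp: datapath_def inj_on_def)
  have s': "snd r ! i = snd p ! i" if i: "i < plen r" for i
  proof -
    have ip: "i < plen p" using i le by simp
    have e: "snd (datapath G r) ! i = snd (datapath G p) ! i" using s i by simp
    then have l: "fst (snd r ! i) = fst (snd p ! i)" and n: "idf G (snd (snd r ! i)) = idf G (snd (snd p ! i))"
      using i ip by (auto simp: datapath_def plen_def split: prod.splits)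
    have "snd (snd r ! i) \<in> V G" using node_in_V[OF G r, of "Suc i"] i nodes_Suc[OF i] by simp
    moreover have "snd (snd p ! i) \<in> V G" using node_in_V[OF G p, of "Suc i"] ip nodes_Suc[OF ip] by simp
    ultimately have "snd (snd r ! i) = snd (snd p ! i)" using n inj by (auto simp: inj_on_def)
    then show ?thesis using l by (simp add: prod_eq_iff)
  qed
  have "snd r = take (plen r) (snd p)"
    by (rule nth_equalityI) (use le s' in \<open>auto simp: plen_def\<close>)
  then show "plen r \<le> plen p \<and> r = path_prefix p (plen r)" using le f'
    by (simp add: path_prefix_def prod_eq_iff)
next
  assume H: "plen r \<le> plen p \<and> r = path_prefix p (plen r)"
  define k where "k = plen r"
  have k: "k \<le> plen p" "r = path_prefix p k" using H by (auto simp: k_def)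
  have "accepts prefA [datapath G (path_prefix p k), datapath G p]"
    using k(1) by (subst accepts_pref) (auto simp: datapath_def path_prefix_def plen_def dplen_def)
  then show "accepts prefA [datapath G r, datapath G p]" using k by simp
qed


lemma last_in_V: "wf_dgraph G \<Longrightarrow> is_path G p \<Longrightarrow> last (nodes p) \<in> V G"
  by (simp add: last_nodes node_in_V)
lemma fst_in_V: "is_path G p \<Longrightarrow> fst p \<in> V G"
  by (simp add: is_path_def)

definition eqid :: "nat \<Rightarrow> nat \<Rightarrow> ('a,'i,'d) fo" where
  "eqid u w = ExN 0 (FAnd (ExN 1 (Reach 1 u 0)) (ExN 1 (Reach 1 w 0)))"

lemma eqid_sem: assumes "wf_dgraph G" "is_path G (\<eta> u)" "is_path G (\<eta> w)"
  shows "fo_sat G \<nu> \<eta> (eqid u w) \<longleftrightarrow> last (nodes (\<eta> u)) = last (nodes (\<eta> w))"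
  using assms fst_in_V[OF assms(2)] fst_in_V[OF assms(3)] last_in_V[OF assms(1,2)] last_in_V[OF assms(1,3)]
  by (auto simp: eqid_def)

definition eqdat :: "nat \<Rightarrow> nat \<Rightarrow> ('a,'i,'d) fo" where
  "eqdat u w = ExN 0 (ExN 1 (FAnd (FAnd (ExN 2 (Reach 2 u 0)) (ExN 2 (Reach 2 w 1)))
     (ExP (u+w+1) (ExP (u+w+2) (FAnd (FAnd (ExN 2 (Reach 0 (u+w+1) 2)) (ExN 2 (Reach 1 (u+w+2) 2)))
        (InA [u+w+1, u+w+2] fdA))))))"

lemma single_path: "v \<in> V G \<Longrightarrow> is_path G (v, [])"
  by (simp add: is_path_def plen_def)

lemma eqdat_sem: assumes G: "wf_dgraph G" and pu: "is_path G (\<eta> u)" and pw: "is_path G (\<eta> w)"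
  shows "fo_sat G \<nu> \<eta> (eqdat u w) \<longleftrightarrow> dataof G (last (nodes (\<eta> u))) = dataof G (last (nodes (\<eta> w)))"
proof -
  have ne: "u+w+1 \<noteq> u" "u+w+1 \<noteq> w" "u+w+2 \<noteq> u" "u+w+2 \<noteq> w" "u+w+1 \<noteq> u+w+2" "u+w+2 \<noteq> u+w+1" by auto
  show ?thesis
  proof
    assume "fo_sat G \<nu> \<eta> (eqdat u w)"
    then obtain A B where "is_path G A" "is_path G B" "fst A = last (nodes (\<eta> u))" "fst B = last (nodes (\<eta> w))"
      "accepts fdA [datapath G A, datapath G B]"
      by (auto simp: eqdat_def ne)
    then show "dataof G (last (nodes (\<eta> u))) = dataof G (last (nodes (\<eta> w)))"
      by (simp add: accepts_fd datapath_def)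
  next
    assume D: "dataof G (last (nodes (\<eta> u))) = dataof G (last (nodes (\<eta> w)))"
    let ?a = "last (nodes (\<eta> u))" and ?b = "last (nodes (\<eta> w))"
    have a: "?a \<in> V G" and b: "?b \<in> V G" using last_in_V[OF G] pu pw by auto
    have "accepts fdA [datapath G (?a, []), datapath G (?b, [])]" using D by (simp add: accepts_fd datapath_def)
    then show "fo_sat G \<nu> \<eta> (eqdat u w)"
      using a b single_path[OF a] single_path[OF b] fst_in_V[OF pu] fst_in_V[OF pw]
      apply (simp add: eqdat_def ne)
      apply (rule exI[of _ ?a], rule exI[of _ "[]"])
      apply (rule conjI, simp)
      apply (rule exI[of _ "[]"])
      apply (simp add: nodes_def)
      done
  qed
qed


definition pv :: "posvar \<Rightarrow> nat" where "pv x = 2 * prod_encode x + 1"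

lemma pv_neq[simp]: "pv x \<noteq> 2 * p" "2 * p \<noteq> pv x"
  unfolding pv_def by presburger+
lemma pv_inj[simp]: "pv x = pv y \<longleftrightarrow> x = y"
  unfolding pv_def by (auto dest: inj_onD[OF inj_prod_encode])

fun tr :: "'a mwl \<Rightarrow> ('a,'i,'d) fo" where
  "tr (Edge a l m p) = InA [pv (l,p), pv (m,p)] (edgeA a)"
| "tr (Lt x y) = InA [pv x, pv y] ltA"
| "tr (EqId x y) = eqid (pv x) (pv y)"
| "tr (EqData x y) = eqdat (pv x) (pv y)"
| "tr (MNot f) = FNot (tr f)"
| "tr (MOr f g) = FNot (FAnd (FNot (tr f)) (FNot (tr g)))"
| "tr (ExPos x f) = ExP (pv x) (FAnd (InA [pv x, 2 * snd x] prefA) (tr f))"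
| "tr (ExPath p f) = ExP (2 * p) (tr f)"

lemma tr_wf: "wf_fo (tr \<phi> :: ('a::finite,'i,'d) fo)"
  by (induction \<phi>) (auto simp: eqid_def eqdat_def wf_ltA wf_edgeA wf_fdA wf_prefA)

lemma fst_snd_datapath: "i < plen p \<Longrightarrow> fst (snd (datapath G p) ! i) = fst (snd p ! i)"
  by (simp add: datapath_def plen_def split: prod.splits)
lemma snd_prefix_nth: "i < k \<Longrightarrow> snd (path_prefix p k) ! i = snd p ! i"
  by (simp add: path_prefix_def)

lemma tr_sem:
  assumes "wf_mwl \<phi>" "wf_dgraph G" "\<forall>p. is_path G (\<mu> p)" "\<forall>p. \<eta> (2*p) = \<mu> p"
    "\<forall>x\<in>fpv \<phi>. \<kappa> x \<le> plen (\<mu> (snd x)) \<and> \<eta> (pv x) = path_prefix (\<mu> (snd x)) (\<kappa> x)"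
  shows "mwl_sat G \<mu> \<kappa> \<phi> \<longleftrightarrow> fo_sat G \<nu> \<eta> (tr \<phi>)"
  using assms
proof (induction \<phi> arbitrary: \<mu> \<kappa> \<eta> \<nu>)
  case (Edge a l m p)
  let ?P = "\<mu> p" and ?kl = "\<kappa> (l,p)" and ?km = "\<kappa> (m,p)"
  have h: "?kl \<le> plen ?P" "?km \<le> plen ?P" "\<eta> (pv (l,p)) = path_prefix ?P ?kl" "\<eta> (pv (m,p)) = path_prefix ?P ?km"
    using Edge(5) by auto
  have "fo_sat G \<nu> \<eta> (tr (Edge a l m p)) \<longleftrightarrow>
     ?km = Suc ?kl \<and> fst (snd (datapath G (path_prefix ?P ?km)) ! ?kl) = a"
    using h by (simp add: accepts_edge)
  also have "\<dots> \<longleftrightarrow> mwl_sat G \<mu> \<kappa> (Edge a l m p)"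
    using h by (auto simp: fst_snd_datapath snd_prefix_nth)
  finally show ?case by simp
next
  case (Lt x y)
  then show ?case by (simp add: accepts_lt)
next
  case (EqId x y)
  have h: "\<kappa> x \<le> plen (\<mu> (snd x))" "\<kappa> y \<le> plen (\<mu> (snd y))" "\<eta> (pv x) = path_prefix (\<mu> (snd x)) (\<kappa> x)"
    "\<eta> (pv y) = path_prefix (\<mu> (snd y)) (\<kappa> y)" using EqId(5) by auto
  have "is_path G (\<eta> (pv x))" "is_path G (\<eta> (pv y))" unfolding h(3,4) using EqId(3) by (simp_all add: is_path_prefix)
  then show ?case using h by (simp add: eqid_sem[OF EqId(2)] last_prefix node_at_def)
next
  case (EqData x y)
  have h: "\<kappa> x \<le> plen (\<mu> (snd x))" "\<kappa> y \<le> plen (\<mu> (snd y))" "\<eta> (pv x) = path_prefix (\<mu> (snd x)) (\<kappa> x)"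
    "\<eta> (pv y) = path_prefix (\<mu> (snd y)) (\<kappa> y)" using EqData(5) by auto
  have "is_path G (\<eta> (pv x))" "is_path G (\<eta> (pv y))" unfolding h(3,4) using EqData(3) by (simp_all add: is_path_prefix)
  then show ?case using h by (simp add: eqdat_sem[OF EqData(2)] last_prefix node_at_def)
next
  case (MNot f)
  then show ?case by simp
next
  case (MOr f g)
  have "mwl_sat G \<mu> \<kappa> f \<longleftrightarrow> fo_sat G \<nu> \<eta> (tr f)" using MOr by (intro MOr.IH(1)) auto
  moreover have "mwl_sat G \<mu> \<kappa> g \<longleftrightarrow> fo_sat G \<nu> \<eta> (tr g)" using MOr by (intro MOr.IH(2)) auto
  ultimately show ?case by simp
next
  case (ExPos x f)
  let ?P = "\<mu> (snd x)"
  have Pp: "is_path G ?P" using ExPos(4) by simp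
  have e: "\<eta> (2 * snd x) = ?P" using ExPos(5) by simp
  have IH: "mwl_sat G \<mu> (\<kappa>(x := k)) f \<longleftrightarrow> fo_sat G \<nu> (\<eta>(pv x := path_prefix ?P k)) (tr f)"
    if k: "k \<le> plen ?P" for k
  proof (rule ExPos(1))
    show "wf_mwl f" using ExPos(2) by simp
    show "wf_dgraph G" "\<forall>p. is_path G (\<mu> p)" by (fact ExPos(3), fact ExPos(4))
    show "\<forall>p. (\<eta>(pv x := path_prefix ?P k)) (2 * p) = \<mu> p" using ExPos(5) by simp
    show "\<forall>y\<in>fpv f. (\<kappa>(x := k)) y \<le> plen (\<mu> (snd y)) \<and>
        (\<eta>(pv x := path_prefix ?P k)) (pv y) = path_prefix (\<mu> (snd y)) ((\<kappa>(x := k)) y)"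
      using ExPos(6) k by auto
  qed
  show ?case
  proof
    assume "mwl_sat G \<mu> \<kappa> (ExPos x f)"
    then obtain k where k: "k \<le> plen ?P" "mwl_sat G \<mu> (\<kappa>(x := k)) f" by auto
    have "accepts prefA [datapath G (path_prefix ?P k), datapath G ?P]"
      using prefix_char[OF ExPos(3) is_path_prefix[OF Pp] Pp] k(1) by simp
    then have "\<exists>r. is_path G r \<and> accepts prefA [datapath G r, datapath G ?P] \<and> fo_sat G \<nu> (\<eta>(pv x := r)) (tr f)"
      using k IH[OF k(1)] is_path_prefix[OF Pp, of k] by blast
    then show "fo_sat G \<nu> \<eta> (tr (ExPos x f))" using e by simp
  next
    assume "fo_sat G \<nu> \<eta> (tr (ExPos x f))"
    then obtain r where r: "is_path G r" "accepts prefA [datapath G r, datapath G ?P]"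
      "fo_sat G \<nu> (\<eta>(pv x := r)) (tr f)" using e by auto
    then have rr: "plen r \<le> plen ?P" "r = path_prefix ?P (plen r)"
      using prefix_char[OF ExPos(3) r(1) Pp] by auto
    then have "mwl_sat G \<mu> (\<kappa>(x := plen r)) f" using IH[OF rr(1)] r(3) by simp
    then show "mwl_sat G \<mu> \<kappa> (ExPos x f)" using rr(1) by auto
  qed
next
  case (ExPath p f)
  have IH: "mwl_sat G (\<mu>(p := r)) \<kappa> f \<longleftrightarrow> fo_sat G \<nu> (\<eta>(2 * p := r)) (tr f)"
    if r: "is_path G r" for r
  proof (rule ExPath(1))
    show "wf_mwl f" using ExPath(2) by simp
    show "wf_dgraph G" by (fact ExPath(3))
    show "\<forall>q. is_path G ((\<mu>(p := r)) q)" using ExPath(4) r by simp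
    show "\<forall>q. (\<eta>(2 * p := r)) (2 * q) = (\<mu>(p := r)) q" using ExPath(5) by simp
    show "\<forall>y\<in>fpv f. \<kappa> y \<le> plen ((\<mu>(p := r)) (snd y)) \<and>
        (\<eta>(2 * p := r)) (pv y) = path_prefix ((\<mu>(p := r)) (snd y)) (\<kappa> y)"
      using ExPath(6) ExPath(2) by auto
  qed
  show ?case using IH by auto
qed


lemma repr_even[simp]: "repr_val \<mu> \<kappa> (2 * p) = \<mu> p"
  by (simp add: repr_val_def)
lemma repr_pv[simp]: "repr_val \<mu> \<kappa> (pv x) = path_prefix (\<mu> (snd x)) (\<kappa> x)"
  by (simp add: repr_val_def pv_def)

theorem mainTheorem16:
  fixes \<phi> :: "('a::finite) mwl"
  assumes "infinite (UNIV :: 'i set)" and "infinite (UNIV :: 'd set)"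
    and "wf_mwl \<phi>"
  shows "\<exists>\<psi> :: ('a, 'i, 'd) fo. wf_fo \<psi> \<and>
    (\<forall>(G :: (nat, 'a, 'i, 'd) dgraph) \<mu> \<kappa> \<nu>.
       wf_dgraph G \<longrightarrow> (\<forall>p. is_path G (\<mu> p)) \<longrightarrow>
       (\<forall>x. \<kappa> x \<le> plen (\<mu> (snd x))) \<longrightarrow>
       (mwl_sat G \<mu> \<kappa> \<phi> \<longleftrightarrow> fo_sat G \<nu> (repr_val \<mu> \<kappa>) \<psi>))"
proof (intro exI conjI allI impI)
  show "wf_fo (tr \<phi> :: ('a, 'i, 'd) fo)" by (rule tr_wf)
  fix G :: "(nat, 'a, 'i, 'd) dgraph" and \<mu> :: "nat \<Rightarrow> (nat, 'a) path" and \<kappa> :: "posvar \<Rightarrow> nat" and \<nu> :: "nat \<Rightarrow> nat"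
  assume "wf_dgraph G" "\<forall>p. is_path G (\<mu> p)" "\<forall>x. \<kappa> x \<le> plen (\<mu> (snd x))"
  then show "mwl_sat G \<mu> \<kappa> \<phi> \<longleftrightarrow> fo_sat G \<nu> (repr_val \<mu> \<kappa>) (tr \<phi>)"
    using assms(3) by (intro tr_sem) auto
qed

end
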